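(* Let $1<p<\infty$ and let $a=\{a_k\}_{k\in\mathbb Z}$ be any sequence of complex numbers. Then $$A_p(a):=\Big(\sum_{k=0}^\infty\Big(2^{k/p'}\sup_{r\in\mathbb N_0}\min(1,2^{r-k})\,\widehat a_{2^r}\Big)^p\Big)^{1/p}\lesssim\Big(\sum_{k\in\mathbb Z}(|k|+1)^{p-2}|a_k|^p\Big)^{1/p},$$ with a constant depending only on $p$.
   Context: $p'=p/(p-1)$. For $r\ge0$, $\widehat a_{2^r}=\sup_{2^r\le|m|<2^{r+1}}\frac1{|m|+1}\big|\sum_{j=0}^m a_j\big|$, where for $m<0$ the sum $\sum_{j=0}^ma_j$ means $\sum_{j=m}^0a_j$. *)

theory Defs
  imports "HOL-Analysis.Analysis"
begin

definition psum :: "(int \<Rightarrow> complex) \<Rightarrow> int \<Rightarrow> complex" where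
  "psum a m = (if m \<ge> 0 then (\<Sum>j\<in>{0..m}. a j) else (\<Sum>j\<in>{m..0}. a j))"

text \<open>ahat a r stands for the quantity hat-a indexed by 2^r.\<close>
definition ahat :: "(int \<Rightarrow> complex) \<Rightarrow> nat \<Rightarrow> real" where
  "ahat a r = (SUP m\<in>{m::int. 2 ^ r \<le> \<bar>m\<bar> \<and> \<bar>m\<bar> < 2 ^ (r + 1)}.
                  cmod (psum a m) / (real_of_int \<bar>m\<bar> + 1))"

definition inner_sup :: "(int \<Rightarrow> complex) \<Rightarrow> nat \<Rightarrow> real" where
  "inner_sup a k = (SUP r::nat. min 1 (2 powr (real r - real k)) * ahat a r)"

end

theory Submission
  imports Defs
begin

lemma holder_pos:
  fixes x rho :: "'a \<Rightarrow> real"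
  assumes "finite J" "p \<ge> 1" "\<forall>j\<in>J. 0 < x j" "\<forall>j\<in>J. 0 < rho j" "J \<noteq> {}"
  shows "(\<Sum>j\<in>J. x j) powr p \<le> (\<Sum>j\<in>J. rho j) powr (p-1) * (\<Sum>j\<in>J. x j powr p * rho j powr (1-p))"
proof -
  define R where "R = (\<Sum>j\<in>J. rho j)"
  have R: "R > 0" unfolding R_def using assms by (simp add: sum_pos)
  have "(\<lambda>x. x powr p) ((\<Sum>j\<in>J. (rho j / R) *\<^sub>R (x j / rho j))) \<le> (\<Sum>j\<in>J. (rho j / R) * (\<lambda>x. x powr p) (x j / rho j))"
    apply (rule convex_on_sum[OF assms(1) assms(5) powr_convex[OF assms(2)]])
    using assms R by (auto simp: R_def sum_divide_distrib[symmetric])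
  also have "(\<Sum>j\<in>J. (rho j / R) *\<^sub>R (x j / rho j)) = (\<Sum>j\<in>J. x j) / R"
    using assms by (auto simp: sum_divide_distrib intro!: sum.cong)
  also have "(\<Sum>j\<in>J. (rho j / R) * (\<lambda>x. x powr p) (x j / rho j)) = (\<Sum>j\<in>J. x j powr p * rho j powr (1-p)) / R"
  proof -
    have "\<And>j. j \<in> J \<Longrightarrow> (rho j / R) * (x j / rho j) powr p = x j powr p * rho j powr (1-p) / R"
    proof -
      fix j assume "j \<in> J"
      then have r: "rho j > 0" "x j > 0" using assms by auto
      have "(x j / rho j) powr p = x j powr p / rho j powr p" using r by (simp add: powr_divide)
      moreover have "rho j powr (1-p) = rho j / rho j powr p" using r by (simp add: powr_diff)
      ultimately show "(rho j / R) * (x j / rho j) powr p = x j powr p * rho j powr (1-p) / R" by (simp add: ac_simps)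
    qed
    then show ?thesis unfolding sum_divide_distrib by (intro sum.cong) auto
  qed
  finally have "((\<Sum>j\<in>J. x j) / R) powr p \<le> (\<Sum>j\<in>J. x j powr p * rho j powr (1-p)) / R" .
  then have "(\<Sum>j\<in>J. x j) powr p / R powr p \<le> (\<Sum>j\<in>J. x j powr p * rho j powr (1-p)) / R"
    using R assms by (simp add: powr_divide sum_nonneg less_imp_le)
  then have "(\<Sum>j\<in>J. x j) powr p \<le> (\<Sum>j\<in>J. x j powr p * rho j powr (1-p)) / R * R powr p"
    using R by (simp add: divide_le_eq)
  also have "\<dots> = R powr (p-1) * (\<Sum>j\<in>J. x j powr p * rho j powr (1-p))"
    using R by (simp add: powr_diff)
  finally show ?thesis unfolding R_def .
qed

lemma holder:
  fixes x rho :: "'a \<Rightarrow> real"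
  assumes "finite J" "p \<ge> 1" "\<forall>j\<in>J. 0 \<le> x j" "\<forall>j\<in>J. 0 < rho j"
  shows "(\<Sum>j\<in>J. x j) powr p \<le> (\<Sum>j\<in>J. rho j) powr (p-1) * (\<Sum>j\<in>J. x j powr p * rho j powr (1-p))"
proof -
  define J' where "J' = {j\<in>J. 0 < x j}"
  have fin: "finite J'" "J' \<subseteq> J" using assms unfolding J'_def by auto
  have nn: "0 \<le> (\<Sum>j\<in>J. rho j) powr (p-1) * (\<Sum>j\<in>J. x j powr p * rho j powr (1-p))"
    by (intro mult_nonneg_nonneg sum_nonneg) auto
  have sx: "(\<Sum>j\<in>J. x j) = (\<Sum>j\<in>J'. x j)"
    using assms unfolding J'_def by (intro sum.mono_neutral_right) auto
  show ?thesis
  proof (cases "J' = {}")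
    case True
    then have "(\<Sum>j\<in>J. x j) = 0" using sx by simp
    then show ?thesis using nn by simp
  next
    case False
    have "(\<Sum>j\<in>J. x j) powr p \<le> (\<Sum>j\<in>J'. rho j) powr (p-1) * (\<Sum>j\<in>J'. x j powr p * rho j powr (1-p))"
      unfolding sx apply (rule holder_pos[of J' p x rho]) using fin False assms unfolding J'_def by auto
    also have "\<dots> \<le> (\<Sum>j\<in>J. rho j) powr (p-1) * (\<Sum>j\<in>J. x j powr p * rho j powr (1-p))"
    proof (rule mult_mono)
      show "(\<Sum>j\<in>J'. rho j) powr (p-1) \<le> (\<Sum>j\<in>J. rho j) powr (p-1)"
        apply (rule powr_mono2)
        subgoal using assms by simp
        subgoal using fin assms by (meson less_imp_le subsetD sum_nonneg)
        subgoal using fin assms by (intro sum_mono2) (auto intro: less_imp_le)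
        done
      show "(\<Sum>j\<in>J'. x j powr p * rho j powr (1-p)) \<le> (\<Sum>j\<in>J. x j powr p * rho j powr (1-p))"
        apply (rule sum_mono2) using fin assms by auto
    qed (auto intro!: sum_nonneg)
    finally show ?thesis .
  qed
qed

lemma rho_lower:
  fixes n s :: real
  assumes "0 \<le> n" "0 < s" "s \<le> 1"
  shows "(n+1) powr s - n powr s \<ge> s * (n+1) powr (s-1)"
proof (cases "n = 0")
  case True then show ?thesis using assms by simp
next
  case False
  then have n: "n > 0" using assms by simp
  have der: "\<And>x. n \<le> x \<Longrightarrow> x \<le> n+1 \<Longrightarrow> ((\<lambda>z. z powr s) has_real_derivative (s * x powr (s-1))) (at x)"
    by (rule has_real_derivative_powr) (use n in simp)
  obtain z where z: "n < z" "z < n+1" "(n+1) powr s - n powr s = (n+1-n) * (s * z powr (s-1))"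
    using MVT2[of n "n+1" "\<lambda>z. z powr s" "\<lambda>z. s * z powr (s-1)", OF _ der] by auto
  have "(n+1) powr (s-1) \<le> z powr (s-1)" using z n assms by (intro powr_mono2') auto
  then show ?thesis using z assms by (simp add: mult_left_mono)
qed

lemma tele_pos:
  fixes g :: "real \<Rightarrow> real"
  shows "(\<Sum>j\<in>{0..int N}. g (real_of_int \<bar>j\<bar> + 1) - g (real_of_int \<bar>j\<bar>)) = g (real N + 1) - g 0"
proof (induction N)
  case 0 then show ?case by simp
next
  case (Suc N)
  have e: "{0..int (Suc N)} = insert (int (Suc N)) {0..int N}" by auto
  show ?case unfolding e using Suc by (simp add: add.commute)
qed

lemma tele_neg:
  fixes g :: "real \<Rightarrow> real"
  shows "(\<Sum>j\<in>{- int N..0}. g (real_of_int \<bar>j\<bar> + 1) - g (real_of_int \<bar>j\<bar>)) = g (real N + 1) - g 0"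
proof (induction N)
  case 0 then show ?case by simp
next
  case (Suc N)
  have e: "{- int (Suc N)..0} = insert (- int (Suc N)) {- int N..0}" by auto
  show ?case unfolding e using Suc by (simp add: add.commute)
qed

definition Jset :: "int \<Rightarrow> int set" where
  "Jset m = (if m \<ge> 0 then {0..m} else {m..0})"

lemma Jset_finite: "finite (Jset m)" unfolding Jset_def by auto

lemma Jset_abs: "j \<in> Jset m \<Longrightarrow> \<bar>j\<bar> \<le> \<bar>m\<bar>" unfolding Jset_def by (auto split: if_splits)

lemma psum_le: "cmod (psum a m) \<le> (\<Sum>j\<in>Jset m. cmod (a j))"
  unfolding psum_def Jset_def by (auto intro: norm_sum)

lemma Jset_rho:
  assumes "s > 0"
  shows "(\<Sum>j\<in>Jset m. (real_of_int \<bar>j\<bar> + 1) powr s - real_of_int \<bar>j\<bar> powr s) = (real_of_int \<bar>m\<bar> + 1) powr s"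
proof (cases "m \<ge> 0")
  case True
  then have m: "m = int (nat m)" by simp
  have "(\<Sum>j\<in>Jset m. (real_of_int \<bar>j\<bar> + 1) powr s - real_of_int \<bar>j\<bar> powr s)
     = (\<Sum>j\<in>{0..int (nat m)}. (real_of_int \<bar>j\<bar> + 1) powr s - real_of_int \<bar>j\<bar> powr s)"
    using True by (simp add: Jset_def)
  also have "\<dots> = (real (nat m) + 1) powr s - 0 powr s"
    using tele_pos[of "\<lambda>x. x powr s" "nat m"] by simp
  finally show ?thesis using True by simp
next
  case False
  then have m: "m = - int (nat (-m))" by simp
  have "(\<Sum>j\<in>Jset m. (real_of_int \<bar>j\<bar> + 1) powr s - real_of_int \<bar>j\<bar> powr s)
     = (\<Sum>j\<in>{- int (nat (-m))..0}. (real_of_int \<bar>j\<bar> + 1) powr s - real_of_int \<bar>j\<bar> powr s)"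
    using False by (simp add: Jset_def)
  also have "\<dots> = (real (nat (-m)) + 1) powr s - 0 powr s"
    using tele_neg[of "\<lambda>x. x powr s" "nat (-m)"] by simp
  finally show ?thesis using False by simp
qed

lemma term_bound:
  fixes c n s p :: real
  assumes "p > 1" "0 < s" "s \<le> 1" "0 \<le> c" "n \<ge> 1"
  shows "c powr p * ((n powr s - (n-1) powr s) powr (1-p))
      \<le> s powr (1-p) * (n powr (p-2) * c powr p * n powr (1 - s*(p-1)))"
proof -
  have low: "n powr s - (n-1) powr s \<ge> s * n powr (s-1)"
    using rho_lower[of "n-1" s] assms by simp
  have pos: "s * n powr (s-1) > 0" using assms by simp
  have "(n powr s - (n-1) powr s) powr (1-p) \<le> (s * n powr (s-1)) powr (1-p)"
    using low pos assms by (intro powr_mono2') auto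
  also have "\<dots> = s powr (1-p) * n powr ((s-1)*(1-p))"
    using assms by (simp add: powr_mult powr_powr)
  also have "n powr ((s-1)*(1-p)) = n powr (p-2) * n powr (1 - s*(p-1))"
    using assms by (simp add: powr_add[symmetric] algebra_simps)
  finally have "(n powr s - (n-1) powr s) powr (1-p) \<le> s powr (1-p) * (n powr (p-2) * n powr (1 - s*(p-1)))" .
  then have "c powr p * ((n powr s - (n-1) powr s) powr (1-p)) \<le> c powr p * (s powr (1-p) * (n powr (p-2) * n powr (1 - s*(p-1))))"
    by (rule mult_left_mono) simp
  then show ?thesis by (simp add: ac_simps)
qed

lemma psum_bound:
  fixes a :: "int \<Rightarrow> complex"
  assumes "p > 1" "0 < s" "s \<le> 1"
  shows "cmod (psum a m) powr p \<le> (real_of_int \<bar>m\<bar> + 1) powr (s*(p-1)) * (s powr (1-p) *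
     (\<Sum>j\<in>Jset m. (real_of_int \<bar>j\<bar> + 1) powr (p-2) * cmod (a j) powr p * (real_of_int \<bar>j\<bar> + 1) powr (1 - s*(p-1))))"
proof -
  define rho where "rho j = (real_of_int \<bar>j\<bar> + 1) powr s - real_of_int \<bar>j\<bar> powr s" for j :: int
  have rpos: "rho j > 0" for j
  proof -
    have "rho j \<ge> s * (real_of_int \<bar>j\<bar> + 1) powr (s-1)" unfolding rho_def
      using rho_lower[of "real_of_int \<bar>j\<bar>" s] assms by simp
    moreover have "s * (real_of_int \<bar>j\<bar> + 1) powr (s-1) > 0" using assms by simp
    ultimately show ?thesis by linarith
  qed
  have "cmod (psum a m) powr p \<le> (\<Sum>j\<in>Jset m. cmod (a j)) powr p"
    using psum_le assms by (intro powr_mono2) auto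
  also have "\<dots> \<le> (\<Sum>j\<in>Jset m. rho j) powr (p-1) * (\<Sum>j\<in>Jset m. cmod (a j) powr p * rho j powr (1-p))"
    using assms rpos by (intro holder Jset_finite) auto
  also have "(\<Sum>j\<in>Jset m. rho j) powr (p-1) = (real_of_int \<bar>m\<bar> + 1) powr (s*(p-1))"
    unfolding rho_def using Jset_rho[of s m] assms by (simp add: powr_powr)
  also have "(\<Sum>j\<in>Jset m. cmod (a j) powr p * rho j powr (1-p)) \<le> (\<Sum>j\<in>Jset m. s powr (1-p) *
     ((real_of_int \<bar>j\<bar> + 1) powr (p-2) * cmod (a j) powr p * (real_of_int \<bar>j\<bar> + 1) powr (1 - s*(p-1))))"
  proof (rule sum_mono)
    fix j assume "j \<in> Jset m"
    show "cmod (a j) powr p * rho j powr (1-p) \<le> s powr (1-p) *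
     ((real_of_int \<bar>j\<bar> + 1) powr (p-2) * cmod (a j) powr p * (real_of_int \<bar>j\<bar> + 1) powr (1 - s*(p-1)))"
      using term_bound[of p s "cmod (a j)" "real_of_int \<bar>j\<bar> + 1"] assms unfolding rho_def by simp
  qed
  also have "\<dots> = s powr (1-p) * (\<Sum>j\<in>Jset m. (real_of_int \<bar>j\<bar> + 1) powr (p-2) * cmod (a j) powr p * (real_of_int \<bar>j\<bar> + 1) powr (1 - s*(p-1)))"
    by (simp add: sum_distrib_left)
  finally show ?thesis by (simp add: mult_left_mono)
qed

definition psi :: "real \<Rightarrow> real \<Rightarrow> nat \<Rightarrow> real \<Rightarrow> real" where
  "psi t p k n = min (2 powr (real k * (t-p))) (n powr (t-p))"

lemma min_bound:
  fixes M n t p :: real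
  assumes "p > 1" "0 < t" "t < 1" "1 \<le> n" "n \<le> M" "2 powr real r < M"
  shows "(min 1 (2 powr (real r - real k))) powr p * M powr (t-p) \<le> psi t p k n"
proof -
  define \<mu> where "\<mu> = min 1 (2 powr (real r - real k))"
  define K where "K = (2::real) powr real k"
  have K: "K > 0" unfolding K_def by simp
  have mu0: "\<mu> > 0" unfolding \<mu>_def by simp
  have mu1: "\<mu> \<le> 1" unfolding \<mu>_def by simp
  have "2 powr (real r - real k) = 2 powr real r / K" unfolding K_def by (simp add: powr_diff)
  also have "\<dots> \<le> M / K" using assms K by (simp add: divide_right_mono)
  finally have mu2: "\<mu> \<le> M / K" unfolding \<mu>_def by simp
  have M: "M > 0" using assms by simp
  have mup: "\<mu> powr p \<le> 1" using mu0 mu1 assms by (simp add: powr_le1)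
  have A: "\<mu> powr p * M powr (t-p) \<le> n powr (t-p)"
  proof -
    have "\<mu> powr p * M powr (t-p) \<le> M powr (t-p)" using mup by (simp add: mult_left_le_one_le)
    also have "\<dots> \<le> n powr (t-p)" using assms by (intro powr_mono2') auto
    finally show ?thesis .
  qed
  have B: "\<mu> powr p * M powr (t-p) \<le> 2 powr (real k * (t-p))"
  proof (cases "K \<le> M")
    case True
    have "\<mu> powr p * M powr (t-p) \<le> M powr (t-p)" using mup by (simp add: mult_left_le_one_le)
    also have "\<dots> \<le> K powr (t-p)" using assms True K by (intro powr_mono2') auto
    also have "\<dots> = 2 powr (real k * (t-p))" unfolding K_def by (simp add: powr_powr)
    finally show ?thesis .
  next
    case False
    have "\<mu> powr p \<le> (M / K) powr p" using mu0 mu2 assms by (intro powr_mono2) auto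
    then have "\<mu> powr p * M powr (t-p) \<le> (M / K) powr p * M powr (t-p)" by (simp add: mult_right_mono)
    also have "\<dots> = M powr t / K powr p" using M K by (simp add: powr_divide powr_add[symmetric])
    also have "\<dots> \<le> K powr t / K powr p" using False M K assms by (intro divide_right_mono powr_mono2) auto
    also have "\<dots> = 2 powr (real k * (t-p))" unfolding K_def by (simp add: powr_powr powr_diff[symmetric] algebra_simps)
    finally show ?thesis .
  qed
  show ?thesis using A B unfolding psi_def \<mu>_def by simp
qed

lemma ksum_bound:
  fixes n t p :: real
  assumes "p > 1" "0 < t" "t < 1" "1 \<le> n"
  shows "n powr (1-t) * (\<Sum>k<K. 2 powr (real k * (p-1)) * psi t p k n)
     \<le> 2 powr (p-1) / (2 powr (p-1) - 1) + 1 / (1 - 2 powr (t-1))"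
proof -
  define x where "x = (2::real) powr (p-1)"
  define y where "y = (2::real) powr (t-1)"
  have x1: "x > 1" unfolding x_def using assms by simp
  have "(2::real) powr (t-1) < 1" using powr_less_cancel_iff[of "2::real" "t-1" 0] assms by simp
  then have y0: "y > 0" "y < 1" unfolding y_def using assms by auto
  have n0: "n > 0" using assms by simp
  have ex: "\<exists>k. n < 2^k" using real_arch_pow[of 2 n] by auto
  define K1 where "K1 = (LEAST k. n < (2::real)^k)"
  have K1a: "n < 2^K1" unfolding K1_def using LeastI_ex[OF ex] .
  have K1pos: "K1 \<noteq> 0" using K1a assms by (cases "K1 = 0") auto
  have K1b: "2^(K1-1) \<le> n"
  proof -
    have "\<not> n < (2::real)^(K1-1)" unfolding K1_def
      by (rule not_less_Least) (use K1pos K1_def in auto)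
    then show ?thesis by simp
  qed
  have xk: "2 powr (real k * (p-1)) = x^k" for k unfolding x_def by (simp add: powr_power)
  have yk: "2 powr (real k * (t-1)) = y^k" for k unfolding y_def by (simp add: powr_power)
  define A where "A k = (if k < K1 then x^k * n powr (t-p) else 0)" for k
  define B where "B k = (if K1 \<le> k then y^k else 0)" for k
  have tk: "2 powr (real k * (p-1)) * psi t p k n \<le> A k + B k" for k
  proof (cases "k < K1")
    case True
    have "2 powr (real k * (p-1)) * psi t p k n \<le> 2 powr (real k * (p-1)) * n powr (t-p)"
      unfolding psi_def by (intro mult_left_mono) auto
    then show ?thesis using True unfolding A_def B_def xk by simp
  next
    case False
    have "2 powr (real k * (p-1)) * psi t p k n \<le> 2 powr (real k * (p-1)) * 2 powr (real k * (t-p))"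
      unfolding psi_def by (intro mult_left_mono) auto
    also have "\<dots> = 2 powr (real k * (t-1))" by (simp add: powr_add[symmetric] algebra_simps)
    finally show ?thesis using False unfolding A_def B_def yk by simp
  qed
  have Apos: "A k \<ge> 0" for k unfolding A_def using x1 by simp
  have Bpos: "B k \<ge> 0" for k unfolding B_def using y0 by simp
  have SA: "(\<Sum>k<K. A k) \<le> 2 powr (p-1) / (x - 1) * n powr (t-1)"
  proof -
    have "(\<Sum>k<K. A k) = (\<Sum>k\<in>{..<K} \<inter> {..<K1}. A k)"
      by (rule sum.mono_neutral_right) (auto simp: A_def)
    also have "\<dots> \<le> (\<Sum>k<K1. A k)" using Apos by (intro sum_mono2) auto
    also have "\<dots> = n powr (t-p) * (\<Sum>k<K1. x^k)" unfolding A_def by (simp add: sum_distrib_right mult.commute)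
    also have "(\<Sum>k<K1. x^k) = (x^K1 - 1) / (x - 1)" using x1 by (simp add: sum_gp_strict field_simps)
    also have "\<dots> \<le> x^K1 / (x - 1)" using x1 by (simp add: divide_right_mono)
    also have "x^K1 = (2^K1) powr (p-1)" unfolding x_def
      by (simp add: powr_power powr_realpow[symmetric] powr_powr mult.commute)
    also have "\<dots> \<le> (2*n) powr (p-1)"
    proof -
      have "(2::real)^K1 = 2 * 2^(K1-1)" using K1pos by (cases K1) auto
      then have "(2::real)^K1 \<le> 2 * n" using K1b by simp
      then show ?thesis using assms by (intro powr_mono2) auto
    qed
    finally have "(\<Sum>k<K. A k) \<le> n powr (t-p) * ((2*n) powr (p-1) / (x - 1))"
      using n0 x1 by (simp add: mult_left_mono divide_right_mono)
    also have "\<dots> = 2 powr (p-1) / (x - 1) * (n powr (t-p) * n powr (p-1))"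
      using n0 by (simp add: powr_mult)
    also have "n powr (t-p) * n powr (p-1) = n powr (t-1)" by (simp add: powr_add[symmetric])
    finally show ?thesis .
  qed
  have SB: "(\<Sum>k<K. B k) \<le> n powr (t-1) / (1 - y)"
  proof -
    have g: "(\<lambda>i. B (i + K1)) sums (y^K1 / (1-y))"
    proof -
      have "(\<lambda>i. y^K1 * y^i) sums (y^K1 * (1 / (1-y)))"
        by (rule sums_mult, rule geometric_sums) (use y0 in simp)
      then show ?thesis unfolding B_def by (simp add: power_add ac_simps)
    qed
    have "(\<Sum>i<K1. B i) = 0" unfolding B_def by simp
    then have Bs: "B sums (y^K1 / (1-y))" using g sums_iff_shift[of B K1] by simp
    have "(\<Sum>k<K. B k) \<le> suminf B"
      by (rule sum_le_suminf) (use Bs Bpos in \<open>auto simp: sums_iff\<close>)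
    also have "\<dots> = y^K1 / (1-y)" using Bs by (simp add: sums_iff)
    also have "y^K1 = (2^K1) powr (t-1)" unfolding y_def
      by (simp add: powr_power powr_realpow[symmetric] powr_powr mult.commute)
    also have "\<dots> \<le> n powr (t-1)" using K1a assms by (intro powr_mono2') auto
    finally show ?thesis using y0 by (simp add: divide_right_mono)
  qed
  have "(\<Sum>k<K. 2 powr (real k * (p-1)) * psi t p k n) \<le> (\<Sum>k<K. A k + B k)"
    by (intro sum_mono tk)
  also have "\<dots> \<le> 2 powr (p-1) / (x - 1) * n powr (t-1) + n powr (t-1) / (1 - y)"
    using SA SB by (simp add: sum.distrib)
  finally have "n powr (1-t) * (\<Sum>k<K. 2 powr (real k * (p-1)) * psi t p k n)
     \<le> n powr (1-t) * (2 powr (p-1) / (x - 1) * n powr (t-1) + n powr (t-1) / (1 - y))"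
    by (simp add: mult_left_mono)
  also have "\<dots> = (2 powr (p-1) / (x - 1)) * (n powr (1-t) * n powr (t-1)) + (n powr (1-t) * n powr (t-1)) / (1 - y)"
    by (simp add: algebra_simps)
  also have "n powr (1-t) * n powr (t-1) = 1" using n0 by (simp add: powr_add[symmetric])
  finally show ?thesis unfolding x_def y_def by simp
qed

lemma infsum_finsum:
  fixes f :: "nat \<Rightarrow> 'a \<Rightarrow> real"
  assumes "\<And>k. f k summable_on A"
  shows "(\<lambda>j. \<Sum>k<K. f k j) summable_on A \<and> infsum (\<lambda>j. \<Sum>k<K. f k j) A = (\<Sum>k<K. infsum (f k) A)"
proof (induction K)
  case 0 then show ?case by simp
next
  case (Suc K)
  then show ?case using assms[of K] by (simp add: summable_on_add infsum_add)
qed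

definition Tset :: "nat \<Rightarrow> int set" where
  "Tset r = {m::int. 2 ^ r \<le> \<bar>m\<bar> \<and> \<bar>m\<bar> < 2 ^ (r + 1)}"

lemma Tset_finite: "finite (Tset r)"
proof -
  have "Tset r \<subseteq> {- (2^(r+1))..2^(r+1)}" unfolding Tset_def by auto
  then show ?thesis by (rule finite_subset) simp
qed

lemma Tset_ne: "(2::int)^r \<in> Tset r" unfolding Tset_def by simp

lemma ahat_Tset: "ahat a r = (SUP m\<in>Tset r. cmod (psum a m) / (real_of_int \<bar>m\<bar> + 1))"
  unfolding ahat_def Tset_def by simp

lemma ahat_nonneg: "ahat a r \<ge> 0"
proof -
  have "0 \<le> cmod (psum a (2^r)) / (real_of_int \<bar>2^r\<bar> + 1)" by simp
  also have "\<dots> \<le> ahat a r" unfolding ahat_Tset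
    by (rule cSUP_upper[OF Tset_ne]) (simp add: Tset_finite)
  finally show ?thesis .
qed

lemma ahat_le:
  assumes "\<And>m. m \<in> Tset r \<Longrightarrow> cmod (psum a m) / (real_of_int \<bar>m\<bar> + 1) \<le> X"
  shows "ahat a r \<le> X"
  unfolding ahat_Tset using Tset_ne by (intro cSUP_least assms) auto

lemma rearr: "(a::real) * (b * (c * x)) / d = c * x * (a * (b / d))"
  by (simp add: mult_ac)

lemma per_k:
  fixes a :: "int \<Rightarrow> complex" and p s t :: real
  assumes p: "p > 1" and s: "0 < s" "s \<le> 1" and t: "t = s*(p-1)" "t < 1"
  and sw: "(\<lambda>j. (real_of_int \<bar>j\<bar> + 1) powr (p - 2) * cmod (a j) powr p) summable_on UNIV"
  shows "min 1 (2 powr (real r - real k)) * ahat a r \<le> (s powr (1-p) * infsum (\<lambda>j. (real_of_int \<bar>j\<bar> + 1) powr (p - 2) * cmod (a j) powr p * (real_of_int \<bar>j\<bar> + 1) powr (1-t) * psi t p k (real_of_int \<bar>j\<bar> + 1)) UNIV) powr (1/p)"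
proof -
  define w where "w j = (real_of_int \<bar>j\<bar> + 1) powr (p - 2) * cmod (a j) powr p" for j
  define g where "g j = w j * (real_of_int \<bar>j\<bar> + 1) powr (1-t) * psi t p k (real_of_int \<bar>j\<bar> + 1)" for j
  define \<mu> where "\<mu> = min 1 (2 powr (real r - real k))"
  define B where "B = (s powr (1-p) * infsum g UNIV) powr (1/p)"
  have t0: "t > 0" using t s p by simp
  have mu0: "\<mu> > 0" unfolding \<mu>_def by simp
  have g0: "g j \<ge> 0" for j unfolding g_def w_def psi_def by simp
  have gw: "g j \<le> w j" for j
  proof -
    define n where "n = real_of_int \<bar>j\<bar> + 1"
    have n1: "n \<ge> 1" unfolding n_def by simp
    have "n powr (1-t) * psi t p k n \<le> n powr (1-t) * n powr (t-p)"
      unfolding psi_def by (intro mult_left_mono) auto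
    also have "\<dots> = n powr (1-p)" using n1 by (simp add: powr_add[symmetric])
    also have "\<dots> \<le> 1" using powr_mono[of "1-p" 0 n] n1 p by simp
    finally have "n powr (1-t) * psi t p k n \<le> 1" .
    then have "w j * (n powr (1-t) * psi t p k n) \<le> w j * 1"
      by (intro mult_left_mono) (simp_all add: w_def)
    then show ?thesis unfolding g_def n_def by (simp add: ac_simps)
  qed
  have sg: "g summable_on UNIV"
    by (rule summable_on_comparison_test[OF sw[folded w_def]]) (use gw g0 in auto)
  have I0: "infsum g UNIV \<ge> 0" by (rule infsum_nonneg) (use g0 in auto)
  have key: "\<mu> * (cmod (psum a m) / (real_of_int \<bar>m\<bar> + 1)) \<le> B" if m: "m \<in> Tset r" for m
  proof -
    define M where "M = real_of_int \<bar>m\<bar> + 1"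
    define c where "c = cmod (psum a m)"
    have M1: "M \<ge> 1" unfolding M_def by simp
    have rM: "2 powr real r < M"
    proof -
      have "(2::int)^r \<le> \<bar>m\<bar>" using m unfolding Tset_def by simp
      then have "(2::real)^r \<le> real_of_int \<bar>m\<bar>" by (metis of_int_le_iff of_int_numeral of_int_power)
      then show ?thesis unfolding M_def by (simp add: powr_realpow)
    qed
    have "(\<mu> * (c / M)) powr p = \<mu> powr p * c powr p / M powr p"
      using mu0 M1 by (simp add: powr_mult powr_divide c_def)
    also have "\<dots> \<le> \<mu> powr p * (M powr t * (s powr (1-p) * (\<Sum>j\<in>Jset m. w j * (real_of_int \<bar>j\<bar> + 1) powr (1 - t)))) / M powr p"
      using psum_bound[of p s a m] p s t unfolding c_def M_def w_def
      by (intro divide_right_mono mult_left_mono) auto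
    also have "\<dots> = s powr (1-p) * (\<Sum>j\<in>Jset m. w j * (real_of_int \<bar>j\<bar> + 1) powr (1 - t)) * (\<mu> powr p * (M powr t / M powr p))"
      by (rule rearr)
    also have "\<dots> = s powr (1-p) * (\<Sum>j\<in>Jset m. w j * (real_of_int \<bar>j\<bar> + 1) powr (1 - t) * (\<mu> powr p * M powr (t-p)))"
      unfolding powr_diff[of M t p, symmetric] by (simp only: mult.assoc sum_distrib_right)
    also have "\<dots> \<le> s powr (1-p) * (\<Sum>j\<in>Jset m. g j)"
    proof (intro mult_left_mono sum_mono)
      fix j assume j: "j \<in> Jset m"
      have "\<mu> powr p * M powr (t-p) \<le> psi t p k (real_of_int \<bar>j\<bar> + 1)"
        unfolding \<mu>_def using Jset_abs[OF j] p t0 t rM unfolding M_def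
        by (intro min_bound) auto
      then show "w j * (real_of_int \<bar>j\<bar> + 1) powr (1 - t) * (\<mu> powr p * M powr (t-p)) \<le> g j"
        unfolding g_def by (intro mult_left_mono) (auto simp: w_def)
    qed simp
    also have "\<dots> \<le> s powr (1-p) * infsum g UNIV"
      by (intro mult_left_mono finite_sum_le_infsum sg Jset_finite) (use g0 in auto)
    finally have le: "(\<mu> * (c / M)) powr p \<le> s powr (1-p) * infsum g UNIV" .
    have nn: "\<mu> * (c / M) \<ge> 0" using mu0 M1 unfolding c_def by simp
    have "\<mu> * (c / M) = ((\<mu> * (c / M)) powr p) powr (1/p)"
      using nn p mu0 M1 by (simp add: powr_powr c_def)
    also have "\<dots> \<le> B" unfolding B_def using le p by (intro powr_mono2) auto
    finally show ?thesis unfolding c_def M_def .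
  qed
  have "ahat a r \<le> B / \<mu>"
    by (rule ahat_le) (use key mu0 in \<open>simp add: field_simps\<close>)
  then have "\<mu> * ahat a r \<le> B" using mu0 by (simp add: field_simps)
  then show ?thesis unfolding \<mu>_def B_def g_def w_def .
qed

lemma g_summable:
  fixes a :: "int \<Rightarrow> complex" and p t :: real
  assumes p: "p > 1" and t: "0 < t" "t < 1"
  and sw: "(\<lambda>j. (real_of_int \<bar>j\<bar> + 1) powr (p - 2) * cmod (a j) powr p) summable_on UNIV"
  shows "(\<lambda>j. (real_of_int \<bar>j\<bar> + 1) powr (p - 2) * cmod (a j) powr p * (real_of_int \<bar>j\<bar> + 1) powr (1-t) * psi t p k (real_of_int \<bar>j\<bar> + 1)) summable_on UNIV"
proof -
  define w where "w j = (real_of_int \<bar>j\<bar> + 1) powr (p - 2) * cmod (a j) powr p" for j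
  define g where "g j = w j * (real_of_int \<bar>j\<bar> + 1) powr (1-t) * psi t p k (real_of_int \<bar>j\<bar> + 1)" for j
  have g0: "g j \<ge> 0" for j unfolding g_def w_def psi_def by simp
  have gw: "g j \<le> w j" for j
  proof -
    define n where "n = real_of_int \<bar>j\<bar> + 1"
    have n1: "n \<ge> 1" unfolding n_def by simp
    have "n powr (1-t) * psi t p k n \<le> n powr (1-t) * n powr (t-p)"
      unfolding psi_def by (intro mult_left_mono) auto
    also have "\<dots> = n powr (1-p)" using n1 by (simp add: powr_add[symmetric])
    also have "\<dots> \<le> 1" using powr_mono[of "1-p" 0 n] n1 p by simp
    finally have "n powr (1-t) * psi t p k n \<le> 1" .
    then have "w j * (n powr (1-t) * psi t p k n) \<le> w j * 1"
      by (intro mult_left_mono) (simp_all add: w_def)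
    then show ?thesis unfolding g_def n_def by (simp add: ac_simps)
  qed
  have "g summable_on UNIV"
    by (rule summable_on_comparison_test[OF sw[folded w_def]]) (use gw g0 in auto)
  then show ?thesis unfolding g_def w_def .
qed

theorem mainTheorem11:
  fixes p :: real
  assumes "1 < p"
  shows "\<exists>C>0. \<forall>a :: int \<Rightarrow> complex.
    (\<lambda>k. (real_of_int \<bar>k\<bar> + 1) powr (p - 2) * cmod (a k) powr p) summable_on UNIV \<longrightarrow>
      (\<forall>k::nat. bdd_above (range (\<lambda>r::nat. min 1 (2 powr (real r - real k)) * ahat a r))) \<and>
      summable (\<lambda>k::nat. (2 powr (real k / (p / (p - 1))) * inner_sup a k) powr p) \<and>
      (\<Sum>k::nat. (2 powr (real k / (p / (p - 1))) * inner_sup a k) powr p) powr (1 / p)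
        \<le> C * (\<Sum>\<^sub>\<infinity>k\<in>(UNIV::int set). (real_of_int \<bar>k\<bar> + 1) powr (p - 2) * cmod (a k) powr p) powr (1 / p)"
proof -
  have p: "p > 1" by fact
  define s where "s = min 1 (1/(2*(p-1)))"
  define t where "t = s*(p-1)"
  have s: "0 < s" "s \<le> 1" unfolding s_def using p by auto
  have t0: "t > 0" unfolding t_def using s p by simp
  have "t \<le> 1/(2*(p-1)) * (p-1)" unfolding t_def s_def using p by (intro mult_right_mono) auto
  also have "1/(2*(p-1)) * (p-1) = 1/2" using p by simp
  finally have t1: "t < 1" by simp
  define c1 where "c1 = s powr (1-p)"
  define c2 where "c2 = 2 powr (p-1) / (2 powr (p-1) - 1) + 1 / (1 - 2 powr (t-1))"
  have c1: "c1 > 0" unfolding c1_def using s by simp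
  have "(2::real) powr (t-1) < 1" using powr_less_cancel_iff[of "2::real" "t-1" 0] t1 by simp
  moreover have "(2::real) powr (p-1) > 1" using powr_less_cancel_iff[of "2::real" 0 "p-1"] p by simp
  ultimately have c2: "c2 > 0" unfolding c2_def by (simp add: add_pos_pos)
  show ?thesis
  proof (intro exI[of _ "(c1*c2) powr (1/p)"] conjI allI impI)
    show "(c1*c2) powr (1/p) > 0" using c1 c2 by simp
    fix a :: "int \<Rightarrow> complex"
    assume sw: "(\<lambda>k. (real_of_int \<bar>k\<bar> + 1) powr (p - 2) * cmod (a k) powr p) summable_on UNIV"
    define w where "w j = (real_of_int \<bar>j\<bar> + 1) powr (p - 2) * cmod (a j) powr p" for j
    define g where "g k j = w j * (real_of_int \<bar>j\<bar> + 1) powr (1-t) * psi t p k (real_of_int \<bar>j\<bar> + 1)" for k j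
    define \<Phi> where "\<Phi> k = infsum (g k) UNIV" for k
    define S where "S = infsum w UNIV"
    have w0: "w j \<ge> 0" for j unfolding w_def by simp
    have g0: "g k j \<ge> 0" for k j unfolding g_def w_def psi_def by simp
    have sw': "w summable_on UNIV" using sw unfolding w_def .
    have sg: "g k summable_on UNIV" for k
      using g_summable[OF p t0 t1 sw] unfolding g_def w_def .
    have \<Phi>0: "\<Phi> k \<ge> 0" for k unfolding \<Phi>_def by (rule infsum_nonneg) (use g0 in auto)
    have S0: "S \<ge> 0" unfolding S_def by (rule infsum_nonneg) (use w0 in auto)
    have pk: "min 1 (2 powr (real r - real k)) * ahat a r \<le> (c1 * \<Phi> k) powr (1/p)" for k r
      using per_k[OF p s t_def t1 sw, of r k] unfolding c1_def \<Phi>_def g_def w_def .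
    show bdd: "bdd_above (range (\<lambda>r::nat. min 1 (2 powr (real r - real k)) * ahat a r))" for k
      using pk by (intro bdd_aboveI2) 
    have inner: "inner_sup a k \<le> (c1 * \<Phi> k) powr (1/p)" for k
      unfolding inner_sup_def by (rule cSUP_least) (use pk in auto)
    have inner0: "0 \<le> inner_sup a k" for k
    proof -
      have "0 \<le> min 1 (2 powr (real 0 - real k)) * ahat a 0" using ahat_nonneg[of a 0] by simp
      also have "\<dots> \<le> inner_sup a k" unfolding inner_sup_def
        by (rule cSUP_upper) (use bdd in auto)
      finally show ?thesis .
    qed
    have ip: "inner_sup a k powr p \<le> c1 * \<Phi> k" for k
    proof -
      have "inner_sup a k powr p \<le> ((c1 * \<Phi> k) powr (1/p)) powr p"
        using inner inner0 p by (intro powr_mono2) auto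
      also have "\<dots> = c1 * \<Phi> k" using c1 \<Phi>0 p by (simp add: powr_powr)
      finally show ?thesis .
    qed
    define T where "T k = (2 powr (real k / (p / (p - 1))) * inner_sup a k) powr p" for k :: nat
    have Teq: "T k = 2 powr (real k * (p-1)) * inner_sup a k powr p" for k
    proof -
      have "T k = (2 powr (real k / (p / (p - 1)))) powr p * inner_sup a k powr p"
        unfolding T_def using inner0 by (simp add: powr_mult)
      also have "(2 powr (real k / (p / (p - 1)))) powr p = 2 powr (real k * (p-1))"
      proof -
        have "real k / (p / (p - 1)) * p = real k * (p-1)" using p by (simp add: field_simps)
        then show ?thesis by (simp add: powr_powr)
      qed
      finally show ?thesis .
    qed
    have T0: "T k \<ge> 0" for k unfolding T_def by simp
    have partial: "(\<Sum>k<K. T k) \<le> c1 * c2 * S" for K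
    proof -
      have "(\<Sum>k<K. T k) \<le> (\<Sum>k<K. c1 * (2 powr (real k * (p-1)) * \<Phi> k))"
        unfolding Teq by (intro sum_mono) (use ip in \<open>simp add: mult_left_mono\<close>)
      also have "\<dots> = c1 * (\<Sum>k<K. infsum (\<lambda>j. 2 powr (real k * (p-1)) * g k j) UNIV)"
        unfolding \<Phi>_def by (simp add: sum_distrib_left infsum_cmult_right sg)
      also have "(\<Sum>k<K. infsum (\<lambda>j. 2 powr (real k * (p-1)) * g k j) UNIV)
          = infsum (\<lambda>j. \<Sum>k<K. 2 powr (real k * (p-1)) * g k j) UNIV"
        using infsum_finsum[of "\<lambda>k j. 2 powr (real k * (p-1)) * g k j" UNIV K]
        by (simp add: summable_on_cmult_right sg)
      also have "\<dots> \<le> infsum (\<lambda>j. c2 * w j) UNIV"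
      proof (rule infsum_mono)
        show "(\<lambda>j. \<Sum>k<K. 2 powr (real k * (p-1)) * g k j) summable_on UNIV"
          using infsum_finsum[of "\<lambda>k j. 2 powr (real k * (p-1)) * g k j" UNIV K]
          by (simp add: summable_on_cmult_right sg)
        show "(\<lambda>j. c2 * w j) summable_on UNIV" by (rule summable_on_cmult_right[OF sw'])
        fix j :: int
        define n where "n = real_of_int \<bar>j\<bar> + 1"
        have "(\<Sum>k<K. 2 powr (real k * (p-1)) * g k j)
            = w j * (n powr (1-t) * (\<Sum>k<K. 2 powr (real k * (p-1)) * psi t p k n))"
          unfolding g_def n_def by (simp add: sum_distrib_left ac_simps)
        also have "\<dots> \<le> w j * c2"
          using ksum_bound[OF p t0 t1, of n K] w0 unfolding c2_def n_def
          by (intro mult_left_mono) auto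
        finally show "(\<Sum>k<K. 2 powr (real k * (p-1)) * g k j) \<le> c2 * w j" by (simp add: mult.commute)
      qed
      also have "\<dots> = c2 * S" unfolding S_def by (simp add: infsum_cmult_right sw')
      finally show ?thesis using c1 by (simp add: mult_left_mono mult.assoc)
    qed
    have sT: "summable T" by (rule summableI_nonneg_bounded[OF T0 partial])
    then show "summable (\<lambda>k::nat. (2 powr (real k / (p / (p - 1))) * inner_sup a k) powr p)"
      unfolding T_def .
    have "suminf T \<le> c1 * c2 * S" by (rule suminf_le_const[OF sT partial])
    moreover have "suminf T \<ge> 0" using sT T0 by (simp add: suminf_nonneg)
    ultimately have "suminf T powr (1/p) \<le> (c1 * c2 * S) powr (1/p)"
      using p by (intro powr_mono2) auto
    also have "\<dots> = (c1 * c2) powr (1/p) * S powr (1/p)"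
      using c1 c2 S0 by (simp add: powr_mult)
    finally show "(\<Sum>k::nat. (2 powr (real k / (p / (p - 1))) * inner_sup a k) powr p) powr (1 / p)
        \<le> (c1*c2) powr (1/p) * (\<Sum>\<^sub>\<infinity>k\<in>(UNIV::int set). (real_of_int \<bar>k\<bar> + 1) powr (p - 2) * cmod (a k) powr p) powr (1 / p)"
      unfolding T_def S_def w_def .
  qed
qed

end
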